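(* There exist absolute constants $C,c>0$ such that for every integer $v\ge0$ and real $\lambda\ge\frac12$: \begin{enumerate} \item $c(v+\lambda)^{-1}\exp(\Psi_{v,\lambda}-\lambda)\le(-1)^vA_{v,\lambda}\le C(v+\lambda)\exp(\Psi_{v,\lambda}-\lambda)$ and $c(v+\lambda)^{-1}\exp(\Psi_{v,\lambda}+\lambda)\le B_{v,\lambda}\le C(v+\lambda)\exp(\Psi_{v,\lambda}+\lambda)$; \item if moreover $v\le\lambda$, then $c(v+\lambda)^{-1}\exp(\Psi_{v,\lambda}-\lambda)\le(-1)^vA_{v,\lambda}\le C\lambda^{-1/2}\exp(\Psi_{v,\lambda}-\lambda)$. \end{enumerate}
   Context: For integer $v\ge0$ and real $\lambda>0$ define $A_{v,\lambda}=2e^{-\lambda}(-1)^v\sum_{n\ge v,\ n-v\in2\mathbb{Z}}\frac{\lambda^n}{2^n n!}\binom{n}{(n-v)/2}$ and $B_{v,\lambda}=2e^{\lambda}\sum_{n\ge v,\ n-v\in2\mathbb{Z}}\frac{\lambda^n}{2^n n!}\binom{n}{(n-v)/2}$, and $\Psi_{v,\lambda}=\sqrt{v^2+\lambda^2}+v\log\Big(\frac{\sqrt{v^2+\lambda^2}-v}{\lambda}\Big)$ (natural logarithm). *)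

theory Defs
  imports "HOL-Analysis.Analysis"
begin

text \<open>The sum over n \<ge> v with n - v even is written via n = v + 2k, k = 0,1,2,...;
  then (n - v)/2 = k.\<close>

definition A_coef :: "nat \<Rightarrow> real \<Rightarrow> real" where
  "A_coef v lam = 2 * exp (- lam) * (-1) ^ v *
     (\<Sum>k. lam ^ (v + 2*k) / (2 ^ (v + 2*k) * fact (v + 2*k)) * real ((v + 2*k) choose k))"

definition B_coef :: "nat \<Rightarrow> real \<Rightarrow> real" where
  "B_coef v lam = 2 * exp lam *
     (\<Sum>k. lam ^ (v + 2*k) / (2 ^ (v + 2*k) * fact (v + 2*k)) * real ((v + 2*k) choose k))"

definition Psi :: "nat \<Rightarrow> real \<Rightarrow> real" where
  "Psi v lam = sqrt (real v ^ 2 + lam ^ 2)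
     + real v * ln ((sqrt (real v ^ 2 + lam ^ 2) - real v) / lam)"

end

theory Submission
  imports Defs
begin


lemma ln_up3:
  fixes y :: real assumes "0 \<le> y"
  shows "ln (1+y) \<le> y - y^2/2 + y^3/3"
proof -
  let ?f = "\<lambda>t::real. t - t^2/2 + t^3/3 - ln (1+t)"
  have "?f 0 \<le> ?f y"
  proof (rule DERIV_nonneg_imp_increasing_open[OF assms])
    fix t :: real assume t: "0 < t" "t < y"
    have "DERIV ?f t :> (1 - t + t^2 - 1/(1+t))"
      using t by (auto intro!: derivative_eq_intros simp: power2_eq_square field_simps)
    moreover have "1 - t + t^2 - 1/(1+t) \<ge> 0"
    proof -
      have "1 - t + t^2 - 1/(1+t) = t^3/(1+t)" using t by (simp add: field_simps power2_eq_square power3_eq_cube)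
      thus ?thesis using t by simp
    qed
    ultimately show "\<exists>d. DERIV ?f t :> d \<and> d \<ge> 0" by blast
  next
    show "continuous_on {0..y} ?f"
      by (intro continuous_intros) auto
  qed
  thus ?thesis by simp
qed

lemma ln_lowpade:
  fixes y :: real assumes "0 \<le> y"
  shows "2*y/(2+y) \<le> ln (1+y)"
proof -
  let ?f = "\<lambda>t::real. ln (1+t) - 2*t/(2+t)"
  have "?f 0 \<le> ?f y"
  proof (rule DERIV_nonneg_imp_increasing_open[OF assms])
    fix t :: real assume t: "0 < t" "t < y"
    have "DERIV ?f t :> (1/(1+t) - 4/(2+t)^2)"
      using t by (auto intro!: derivative_eq_intros simp: power2_eq_square field_simps)
    moreover have "1/(1+t) - 4/(2+t)^2 \<ge> 0"
    proof -
      have "1/(1+t) - 4/(2+t)^2 = t^2/((1+t)*(2+t)^2)" using t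
        apply (subgoal_tac "(1+t) \<noteq> 0" "(2+t)^2 \<noteq> 0")
        apply (simp add: divide_simps)
        apply (simp add: algebra_simps power2_eq_square)
        apply auto
        done
      thus ?thesis using t by simp
    qed
    ultimately show "\<exists>d. DERIV ?f t :> d \<and> d \<ge> 0" by blast
  next
    show "continuous_on {0..y} ?f"
      by (intro continuous_intros) auto
  qed
  thus ?thesis by simp
qed



lemma stir_up: "ln (fact (Suc m)) \<le> 1 + (real (Suc m) + 1/2) * ln (real (Suc m)) - real (Suc m)"
proof (induction m)
  case 0 then show ?case by simp
next
  case (Suc m)
  define n where "n = real (Suc m)"
  have n1: "n \<ge> 1" by (simp add: n_def)
  have e1: "ln (fact (Suc (Suc m))) = ln (n+1) + ln (fact (Suc m))"
    unfolding n_def by (simp add: ln_mult add.commute)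
  have "2*(1/n)/(2+1/n) \<le> ln (1 + 1/n)" by (rule ln_lowpade) (use n1 in simp)
  moreover have "2*(1/n)/(2+1/n) = 2/(2*n+1)" using n1 by (simp add: field_simps)
  moreover have "ln (1+1/n) = ln (n+1) - ln n"
  proof -
    have "1+1/n = (n+1)/n" using n1 by (simp add: field_simps)
    thus ?thesis using n1 by (simp add: ln_divide_pos)
  qed
  ultimately have k: "2/(2*n+1) \<le> ln (n+1) - ln n" by simp
  have "1 \<le> (n+1/2) * (ln (n+1) - ln n)"
  proof -
    have "(n+1/2) * (2/(2*n+1)) = 1" using n1 by (simp add: field_simps)
    moreover have "(n+1/2) * (2/(2*n+1)) \<le> (n+1/2) * (ln (n+1) - ln n)"
      using k n1 by (intro mult_left_mono) auto
    ultimately show ?thesis by linarith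
  qed
  then show ?case using Suc.IH e1 unfolding n_def by (simp add: algebra_simps)
qed

lemma poly_aux: "0 < (y::real) \<Longrightarrow> y \<le> 1 \<Longrightarrow> (1/y + 1/2)*(y - y^2/2 + y^3/3) \<le> 1 + y^2/(2*(1+y))"
proof -
  assume y: "0 < y" "y \<le> 1"
  have "(1/y + 1/2)*(y - y^2/2 + y^3/3) = 1 + y^2/12 + y^3/6" using y
    by (simp add: field_simps power2_eq_square power3_eq_cube)
  moreover have "y^2/12 + y^3/6 \<le> y^2/(2*(1+y))"
  proof -
    have "(y^2/12 + y^3/6) * (2*(1+y)) = y^2 * ((1+2*y)*(1+y)) / 6"
      by (simp add: field_simps power2_eq_square power3_eq_cube)
    also have "\<dots> \<le> y^2"
    proof -
      have "(1+2*y)*(1+y) \<le> 3*2" using y by (intro mult_mono) auto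
      hence "y^2 * ((1+2*y)*(1+y)) \<le> y^2 * 6" by (intro mult_left_mono) auto
      thus ?thesis by simp
    qed
    finally show ?thesis using y by (simp add: field_simps)
  qed
  ultimately show ?thesis by simp
qed

lemma stir_low: "ln (fact (Suc m)) \<ge> (real (Suc m) + 1/2) * ln (real (Suc m)) - real (Suc m) + 1/2 + 1/(2*real (Suc m))"
proof (induction m)
  case 0 then show ?case by simp
next
  case (Suc m)
  define n where "n = real (Suc m)"
  have n1: "n \<ge> 1" by (simp add: n_def)
  have e1: "ln (fact (Suc (Suc m))) = ln (n+1) + ln (fact (Suc m))"
    unfolding n_def by (simp add: ln_mult add.commute)
  have "ln (1 + 1/n) \<le> 1/n - (1/n)^2/2 + (1/n)^3/3" by (rule ln_up3) (use n1 in simp)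
  moreover have "ln (1+1/n) = ln (n+1) - ln n"
  proof -
    have "1+1/n = (n+1)/n" using n1 by (simp add: field_simps)
    thus ?thesis using n1 by (simp add: ln_divide_pos)
  qed
  ultimately have k: "ln (n+1) - ln n \<le> 1/n - (1/n)^2/2 + (1/n)^3/3" by simp
  have "(n+1/2) * (ln (n+1) - ln n) \<le> (n+1/2) * (1/n - (1/n)^2/2 + (1/n)^3/3)"
    using k n1 by (intro mult_left_mono) auto
  also have "\<dots> = (1/(1/n) + 1/2) * (1/n - (1/n)^2/2 + (1/n)^3/3)" by simp
  also have "\<dots> \<le> 1 + (1/n)^2/(2*(1+1/n))" by (rule poly_aux) (use n1 in auto)
  also have "(1/n)^2/(2*(1+1/n)) = 1/(2*n) - 1/(2*(n+1))" using n1 by (simp add: field_simps power2_eq_square)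
  finally have "(n+1/2) * (ln (n+1) - ln n) \<le> 1 + (1/(2*n) - 1/(2*(n+1)))" .
  then show ?case using Suc.IH e1 unfolding n_def by (simp add: algebra_simps)
qed



definition P :: "real \<Rightarrow> nat \<Rightarrow> real" where "P a m = a^m * exp(-a) / fact m"

lemma P_exp: "a > 0 \<Longrightarrow> P a m = exp (real m * ln a - a - ln (fact m))"
proof -
  assume a: "a > 0"
  have "exp (real m * ln a - a - ln (fact m)) = exp (real m * ln a) * exp (-a) / exp (ln (fact m))"
    by (simp add: exp_diff exp_minus exp_add field_simps)
  also have "exp (real m * ln a) = a^m" using a by (simp add: exp_of_nat_mult)
  also have "exp (ln (fact m)) = (fact m :: real)" by simp
  finally show ?thesis unfolding P_def by (simp add: exp_minus field_simps)
qed

lemma P_pos: "a > 0 \<Longrightarrow> P a m > 0" unfolding P_def by simp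

lemma P_le_sqrt: assumes a: "a > 0" and m: "m \<ge> 1" shows "P a m \<le> 1 / sqrt (real m)"
proof -
  obtain k where k: "m = Suc k" using m by (cases m) auto
  have st0: "(real m + 1/2) * ln (real m) - real m + 1/2 + 1/(2*real m) \<le> ln (fact m)"
    unfolding k by (rule stir_low)
  have "1/(2*real m) \<ge> 0" by simp
  hence st: "ln (fact m) \<ge> (real m + 1/2) * ln (real m) - real m"
    using st0 by linarith
  have m0: "real m > 0" using m by simp
  have "real m * (ln a - ln (real m)) \<le> real m * (a / real m - 1)"
  proof (rule mult_left_mono)
    have "ln (a / real m) \<le> a / real m - 1" using a m0 by (intro ln_le_minus_one) simp
    thus "ln a - ln (real m) \<le> a / real m - 1" using a m0 by (simp add: ln_divide_pos)
  qed simp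
  also have "\<dots> = a - real m" using m0 by (simp add: field_simps)
  finally have "real m * ln a - a - ln (fact m) \<le> - ln (real m) / 2"
    using st by (simp add: algebra_simps)
  hence "P a m \<le> exp (- ln (real m) / 2)" using P_exp[OF a] by simp
  also have "exp (- ln (real m) / 2) = 1 / sqrt (real m)"
    using m0 by (simp add: exp_minus ln_sqrt[symmetric] inverse_eq_divide)
  finally show ?thesis .
qed

lemma P_Suc: "P a (Suc i) = P a i * a / real (Suc i)"
  unfolding P_def by (simp add: field_simps)

lemma P_mono: "j \<le> n \<Longrightarrow> real n \<le> a \<Longrightarrow> P a j \<le> P a n"
proof (induction n arbitrary: j)
  case 0 then show ?case by simp
next
  case (Suc n)
  have a0: "a \<ge> 1" using Suc.prems by simp
  have st: "P a n \<le> P a (Suc n)"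
  proof -
    have p: "P a n \<ge> 0" using a0 P_pos[of a n] by simp
    have "P a n * 1 \<le> P a n * (a / real (Suc n))"
      using Suc.prems by (intro mult_left_mono p) (simp add: field_simps)
    thus ?thesis by (simp add: P_Suc)
  qed
  show ?case
  proof (cases "j = Suc n")
    case True then show ?thesis by simp
  next
    case False
    hence "j \<le> n" using Suc.prems by simp
    hence "P a j \<le> P a n" using Suc.IH Suc.prems by simp
    thus ?thesis using st by simp
  qed
qed

lemma P_upper: assumes a: "a > 0" shows "P a m \<le> sqrt 2 / sqrt a"
proof (cases "m \<ge> 1 \<and> real m \<ge> a/2")
  case True
  have "P a m \<le> 1 / sqrt (real m)" using P_le_sqrt[OF a] True by simp
  also have "\<dots> \<le> sqrt 2 / sqrt a"
  proof -
    have "sqrt a \<le> sqrt (2 * real m)" using True by simp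
    hence "sqrt a \<le> sqrt 2 * sqrt (real m)" by (simp add: real_sqrt_mult)
    thus ?thesis using True a by (simp add: field_simps)
  qed
  finally show ?thesis .
next
  case False
  show ?thesis
  proof (cases "a < 2")
    case True
    hence "m = 0" using False by (cases m) auto
    hence "P a m = exp (-a)" unfolding P_def by simp
    also have "\<dots> \<le> 1" using a by simp
    also have "1 \<le> sqrt 2 / sqrt a" using True a by (simp add: field_simps)
    finally show ?thesis .
  next
    case ge: False
    define n where "n = nat \<lceil>a/2\<rceil>"
    have n1: "real n \<ge> a/2" unfolding n_def by linarith
    have n2: "real n \<le> a" unfolding n_def using ge by linarith
    have n3: "n \<ge> 1" using n1 ge by linarith
    have mn: "m \<le> n" using False n1 n3 by (cases "m \<ge> 1") auto
    have "P a m \<le> P a n" by (rule P_mono[OF mn n2])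
    also have "\<dots> \<le> 1 / sqrt (real n)" using P_le_sqrt[OF a n3] .
    also have "\<dots> \<le> sqrt 2 / sqrt a"
    proof -
      have "sqrt a \<le> sqrt (2 * real n)" using n1 by simp
      hence "sqrt a \<le> sqrt 2 * sqrt (real n)" by (simp add: real_sqrt_mult)
      thus ?thesis using n3 a by (simp add: field_simps)
    qed
    finally show ?thesis .
  qed
qed

lemma P_lower: assumes a: "a > 0" shows "P a (nat \<lfloor>a\<rfloor>) \<ge> exp (-2) / sqrt (a+1)"
proof (cases "nat \<lfloor>a\<rfloor> = 0")
  case True
  hence a1: "a < 1" by linarith
  have "exp (-2) / sqrt (a+1) \<le> exp (-2)" using a by (simp add: divide_le_eq)
  also have "exp (-2) \<le> exp (-a)" using a1 by simp
  also have "exp (-a) = P a (nat \<lfloor>a\<rfloor>)" using True unfolding P_def by simp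
  finally show ?thesis .
next
  case False
  define n where "n = nat \<lfloor>a\<rfloor>"
  have n1: "n \<ge> 1" using False unfolding n_def by linarith
  have na: "real n \<le> a" "a < real n + 1" unfolding n_def using a by linarith+
  obtain k where k: "n = Suc k" using n1 by (cases n) auto
  have st: "ln (fact n) \<le> 1 + (real n + 1/2) * ln (real n) - real n"
    using stir_up[of k] k by simp
  have "ln (real n) \<le> ln a" using na n1 by simp
  hence "real n * ln (real n) \<le> real n * ln a" by (intro mult_left_mono) auto
  moreover have "ln (real n) \<le> ln (a+1)" using na n1 by simp
  ultimately have "-2 - ln (a+1) / 2 \<le> real n * ln a - a - ln (fact n)"
    using st na by (simp add: algebra_simps)
  hence "exp (-2 - ln (a+1) / 2) \<le> P a n" using P_exp[OF a] by simp
  moreover have "exp (-2 - ln (a+1) / 2) = exp (-2) / sqrt (a+1)"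
    using a by (simp add: exp_diff ln_sqrt[symmetric])
  ultimately show ?thesis unfolding n_def by simp
qed



definition tm :: "nat \<Rightarrow> real \<Rightarrow> nat \<Rightarrow> real" where
  "tm v lam k = lam ^ (v + 2*k) / (2 ^ (v + 2*k) * fact (v + 2*k)) * real ((v + 2*k) choose k)"

lemma tm_eq:
  fixes v :: nat and lam :: real and k :: nat
  assumes lam: "lam > 0"
  defines "s \<equiv> sqrt (real v ^ 2 + lam ^ 2)"
  defines "a \<equiv> (real v + s) / 2" and "b \<equiv> (s - real v) / 2"
  shows "tm v lam k = exp (Psi v lam) * (P a (v+k) * P b k)"
proof -
  have s2: "s^2 = real v ^ 2 + lam^2" unfolding s_def by simp
  have s0: "s \<ge> 0" unfolding s_def by simp
  have sv: "s > real v"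
  proof -
    have "real v ^ 2 < s^2" using s2 lam by simp
    thus ?thesis using s0 by (smt (verit) power_mono)
  qed
  have a0: "a > 0" and b0: "b > 0" using sv unfolding a_def b_def by auto
  have ab: "a * b = (lam/2)^2" unfolding a_def b_def using s2
    by (simp add: field_simps power2_eq_square algebra_simps)
  have y: "(s - real v) / lam = (lam/2) / a"
  proof -
    have "(s - real v) * (real v + s) = lam * lam" using s2 by (simp add: algebra_simps power2_eq_square)
    thus ?thesis unfolding a_def using lam sv s0 by (simp add: field_simps)
  qed
  have ypos: "(lam/2)/a > 0" using lam a0 by simp
  have ePsi: "exp (Psi v lam) = exp s * ((lam/2)/a) ^ v"
  proof -
    have "Psi v lam = s + real v * ln ((lam/2)/a)" unfolding Psi_def s_def[symmetric] y by simp
    hence "exp (Psi v lam) = exp s * exp (real v * ln ((lam/2)/a))" by (simp add: exp_add)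
    also have "exp (real v * ln ((lam/2)/a)) = ((lam/2)/a)^v" using ypos by (simp add: exp_of_nat_mult)
    finally show ?thesis .
  qed
  have ch: "fact k * fact (v+k) * real ((v + 2*k) choose k) = fact (v+2*k)"
  proof -
    have "fact k * fact (v + 2*k - k) * ((v + 2*k) choose k) = (fact (v+2*k) :: nat)"
      by (rule binomial_fact_lemma) simp
    moreover have "v + 2*k - k = v + k" by simp
    ultimately have "fact k * fact (v+k) * ((v + 2*k) choose k) = (fact (v+2*k) :: nat)" by simp
    hence "real (fact k * fact (v+k) * ((v + 2*k) choose k)) = real (fact (v+2*k))" by simp
    thus ?thesis by (simp add: of_nat_mult)
  qed
  have t1: "tm v lam k = (lam/2)^(v+2*k) / (fact k * fact (v+k))"
  proof -
    have "tm v lam k = (lam/2)^(v+2*k) * real ((v + 2*k) choose k) / fact (v+2*k)"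
      unfolding tm_def by (simp add: power_divide)
    also have "\<dots> = (lam/2)^(v+2*k) * real ((v + 2*k) choose k) / (fact k * fact (v+k) * real ((v + 2*k) choose k))"
      using ch by simp
    also have "\<dots> = (lam/2)^(v+2*k) / (fact k * fact (v+k))"
    proof -
      have "real ((v + 2*k) choose k) \<noteq> 0" by simp
      thus ?thesis by (simp add: field_simps)
    qed
    finally show ?thesis .
  qed
  have sab: "exp (-a) * exp (-b) = exp (-s)" unfolding a_def b_def by (simp add: exp_add[symmetric] field_simps)
  have "exp (Psi v lam) * (P a (v+k) * P b k)
      = exp s * (exp (-a) * exp (-b)) * (((lam/2)/a) ^ v * a^v) * (a*b)^k / (fact (v+k) * fact k)"
    unfolding ePsi P_def by (simp add: power_add power_mult_distrib field_simps)
  also have "\<dots> = (lam/2)^v * ((lam/2)^2)^k / (fact (v+k) * fact k)"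
    unfolding sab ab using a0 by (simp add: power_divide exp_minus)
  also have "\<dots> = tm v lam k"
  proof -
    have "(lam/2)^(v+2*k) = (lam/2)^v * ((lam/2)^2)^k" by (simp add: power_add power_mult)
    thus ?thesis unfolding t1 by (simp add: mult.commute)
  qed
  finally show ?thesis by simp
qed



lemma P_sums: "b > 0 \<Longrightarrow> (\<lambda>k. P b k) sums 1"
proof -
  assume b: "b > 0"
  have "(\<lambda>k. b^k / fact k) sums exp b" using exp_converges[of b] by (simp add: divide_inverse_commute scaleR_conv_of_real)
  hence "(\<lambda>k. b^k / fact k * exp (-b)) sums (exp b * exp (-b))" by (rule sums_mult2)
  moreover have "exp b * exp (-b) = 1" by (simp add: exp_minus)
  ultimately show ?thesis unfolding P_def by (simp add: field_simps)
qed

lemma core: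
  fixes v :: nat and lam :: real
  assumes lam: "lam \<ge> 1/2"
  shows "summable (tm v lam) \<and>
    exp (Psi v lam) * (exp (-4) / (3 * (real v + lam))) \<le> suminf (tm v lam) \<and>
    suminf (tm v lam) \<le> exp (Psi v lam) * (2 / sqrt lam)"
proof -
  define s where "s = sqrt (real v ^ 2 + lam ^ 2)"
  define a where "a = (real v + s) / 2"
  define b where "b = (s - real v) / 2"
  have lam0: "lam > 0" using lam by simp
  have s2: "s^2 = real v ^ 2 + lam^2" unfolding s_def by simp
  have s0: "s \<ge> 0" unfolding s_def by simp
  have sv: "s > real v"
  proof -
    have "real v ^ 2 < s^2" using s2 lam0 by simp
    thus ?thesis using s0 by (rule power_less_imp_less_base)
  qed
  have sl: "s \<ge> lam"
  proof -
    have "lam ^ 2 \<le> s^2" using s2 by simp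
    thus ?thesis using s0 by (rule power2_le_imp_le)
  qed
  have su: "s \<le> real v + lam"
  proof -
    have "s^2 \<le> (real v + lam)^2" using s2 lam0 by (simp add: power2_eq_square algebra_simps)
    moreover have "0 \<le> real v + lam" using lam0 by simp
    ultimately show ?thesis by (rule power2_le_imp_le)
  qed
  have a0: "a > 0" and b0: "b > 0" using sv unfolding a_def b_def by auto
  have T: "\<And>k. tm v lam k = exp (Psi v lam) * (P a (v+k) * P b k)"
    unfolding a_def b_def s_def by (rule tm_eq[OF lam0])
  have ps: "(\<lambda>k. P b k) sums 1" by (rule P_sums[OF b0])
  define K where "K = exp (Psi v lam) * (sqrt 2 / sqrt a)"
  have bound: "\<And>k. tm v lam k \<le> K * P b k"
  proof -
    fix k
    have "P a (v+k) * P b k \<le> (sqrt 2 / sqrt a) * P b k"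
      using P_upper[OF a0] P_pos[OF b0] by (intro mult_right_mono) (auto intro: less_imp_le)
    hence "exp (Psi v lam) * (P a (v+k) * P b k) \<le> exp (Psi v lam) * ((sqrt 2 / sqrt a) * P b k)"
      by (rule mult_left_mono) simp
    thus "tm v lam k \<le> K * P b k" unfolding T K_def
      by (metis mult.assoc)
  qed
  have nn: "\<And>k. tm v lam k \<ge> 0" unfolding T using P_pos[OF a0] P_pos[OF b0] by (simp add: less_imp_le)
  have sK: "summable (\<lambda>k. K * P b k)" using ps by (intro summable_mult) (simp add: sums_summable)
  have sm: "summable (tm v lam)"
    by (rule summable_comparison_test'[OF sK]) (use nn bound in auto)
  have up1: "suminf (tm v lam) \<le> K"
  proof -
    have "suminf (tm v lam) \<le> suminf (\<lambda>k. K * P b k)" by (rule suminf_le[OF bound sm sK])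
    also have "suminf (\<lambda>k. K * P b k) = K * 1" using ps by (simp add: suminf_mult sums_iff)
    finally show ?thesis by simp
  qed
  have "sqrt 2 / sqrt a \<le> 2 / sqrt lam"
  proof -
    have "lam \<le> 2 * a" unfolding a_def using sl by simp
    hence "sqrt lam \<le> sqrt 2 * sqrt a" by (simp add: real_sqrt_mult[symmetric])
    hence "sqrt 2 * sqrt lam \<le> sqrt 2 * (sqrt 2 * sqrt a)"
      by (intro mult_left_mono) auto
    also have "sqrt 2 * (sqrt 2 * sqrt a) = 2 * sqrt a" by (simp add: mult.assoc[symmetric])
    finally have "sqrt 2 * sqrt lam \<le> 2 * sqrt a" .
    thus ?thesis using a0 lam0 by (simp add: field_simps)
  qed
  hence up: "suminf (tm v lam) \<le> exp (Psi v lam) * (2 / sqrt lam)"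
  proof -
    have "K \<le> exp (Psi v lam) * (2 / sqrt lam)" unfolding K_def
      by (rule mult_left_mono) (use \<open>sqrt 2 / sqrt a \<le> 2 / sqrt lam\<close> in auto)
    thus ?thesis using up1 by linarith
  qed
  define k0 where "k0 = nat \<lfloor>b\<rfloor>"
  have k0a: "v + k0 = nat \<lfloor>a\<rfloor>"
  proof -
    have "a = b + real v" unfolding a_def b_def by (simp add: field_simps)
    hence "\<lfloor>a\<rfloor> = \<lfloor>b\<rfloor> + int v" by simp
    moreover have "\<lfloor>b\<rfloor> \<ge> 0" using b0 by simp
    ultimately show ?thesis unfolding k0_def by (simp add: nat_add_distrib)
  qed
  have pa: "P a (v+k0) \<ge> exp (-2) / sqrt (3 * (real v + lam))"
  proof -
    have "sqrt (a+1) \<le> sqrt (3 * (real v + lam))" unfolding a_def using su sv lam of_nat_0_le_iff[of v, where ?'a=real] by (simp only: real_sqrt_le_iff) argo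
    hence "exp (-2) / sqrt (3 * (real v + lam)) \<le> exp (-2) / sqrt (a+1)"
      using a0 by (intro divide_left_mono) auto
    thus ?thesis using P_lower[OF a0] k0a by simp
  qed
  have pb: "P b k0 \<ge> exp (-2) / sqrt (3 * (real v + lam))"
  proof -
    have "sqrt (b+1) \<le> sqrt (3 * (real v + lam))" unfolding b_def using su sv lam of_nat_0_le_iff[of v, where ?'a=real] by (simp only: real_sqrt_le_iff) argo
    hence "exp (-2) / sqrt (3 * (real v + lam)) \<le> exp (-2) / sqrt (b+1)"
      using b0 by (intro divide_left_mono) auto
    thus ?thesis using P_lower[OF b0] unfolding k0_def by simp
  qed
  have "exp (-2) / sqrt (3 * (real v + lam)) * (exp (-2) / sqrt (3 * (real v + lam))) \<le> P a (v+k0) * P b k0"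
    using P_pos[OF a0, of "v+k0"] lam0 by (intro mult_mono[OF pa pb]) (auto intro!: divide_nonneg_nonneg)
  moreover have "exp (-2) / sqrt (3 * (real v + lam)) * (exp (-2) / sqrt (3 * (real v + lam))) = exp (-4) / (3 * (real v + lam))"
    using lam by (simp add: exp_add[symmetric])
  ultimately have "exp (-4) / (3 * (real v + lam)) \<le> P a (v+k0) * P b k0" by simp
  hence "exp (Psi v lam) * (exp (-4) / (3 * (real v + lam))) \<le> tm v lam k0"
    unfolding T by (rule mult_left_mono) simp
  also have "tm v lam k0 = sum (tm v lam) {k0}" by simp
  also have "\<dots> \<le> suminf (tm v lam)" by (rule sum_le_suminf[OF sm]) (use nn in auto)
  finally show ?thesis using sm up by simp
qed



lemma fin_aux:
  fixes y E S x lam :: real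
  assumes y: "y > 0" and E: "E > 0" and lam: "lam \<ge> 1/2" and x: "x \<ge> 0"
    and lo: "E * (exp (-4) / (3 * (x + lam))) \<le> S" and up: "S \<le> E * (2 / sqrt lam)"
  shows "exp (-4) / 3 * (x + lam) powr (-1) * (E * y) \<le> 2 * y * S"
    and "2 * y * S \<le> 16 * (x + lam) * (E * y)"
    and "2 * y * S \<le> 16 * lam powr (-1/2) * (E * y)"
proof -
  have xl: "x + lam > 0" using x lam by simp
  have S0: "S \<ge> 0" using lo E xl by (smt (verit) divide_nonneg_nonneg exp_gt_zero mult_nonneg_nonneg)
  have p1: "(x + lam) powr (-1) = 1 / (x + lam)" using xl by (simp add: powr_minus powr_one divide_inverse)
  have "exp (-4) / 3 * (x + lam) powr (-1) * (E * y) = y * (E * (exp (-4) / (3 * (x + lam))))"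
    unfolding p1 by (simp add: field_simps)
  also have "\<dots> \<le> y * S" using lo y by (intro mult_left_mono) auto
  also have "\<dots> \<le> 2 * y * S" using S0 y by simp
  finally show "exp (-4) / 3 * (x + lam) powr (-1) * (E * y) \<le> 2 * y * S" .
  have sl: "sqrt lam \<ge> 1/2"
  proof -
    have "(1/2)^2 \<le> lam" using lam by (simp add: power2_eq_square)
    thus ?thesis by (rule real_le_rsqrt)
  qed
  have sl0: "sqrt lam > 0" using lam by simp
  have q: "2 / sqrt lam \<le> 4" using sl sl0 by (simp add: field_simps)
  have "2 * y * S \<le> 2 * y * (E * (2 / sqrt lam))" using up y by (intro mult_left_mono) auto
  also have "\<dots> \<le> 2 * y * (E * 4)" using q y E by (intro mult_left_mono) auto
  also have "\<dots> \<le> 16 * (x + lam) * (E * y)"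
  proof -
    have "8 * (E * y) \<le> (16 * (x + lam)) * (E * y)" using x lam E y by (intro mult_right_mono) auto
    thus ?thesis by (simp add: algebra_simps)
  qed
  finally show "2 * y * S \<le> 16 * (x + lam) * (E * y)" .
  have p2: "lam powr (-1/2) = 1 / sqrt lam"
  proof -
    have "lam powr (-1/2) = lam powr (-(1/2))" by simp
    also have "\<dots> = 1 / lam powr (1/2)" by (rule powr_minus_divide)
    also have "lam powr (1/2) = sqrt lam" using lam by (simp add: powr_half_sqrt)
    finally show ?thesis .
  qed
  have "2 * y * S \<le> 2 * y * (E * (2 / sqrt lam))" using up y by (intro mult_left_mono) auto
  also have "\<dots> = 4 * (1 / sqrt lam) * (E * y)" by (simp add: field_simps)
  also have "\<dots> \<le> 16 * (1 / sqrt lam) * (E * y)" using sl0 E y by (intro mult_right_mono) auto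
  finally show "2 * y * S \<le> 16 * lam powr (-1/2) * (E * y)" unfolding p2 .
qed

lemma neg1sq: "((-1::real)^v) * (-1)^v = 1" by (induct v) auto

theorem proposition4p1:
  shows "\<exists>C c :: real. C > 0 \<and> c > 0 \<and>
    (\<forall>(v::nat) (lam::real). lam \<ge> 1/2 \<longrightarrow>
      (c * (real v + lam) powr (-1) * exp (Psi v lam - lam) \<le> (-1) ^ v * A_coef v lam \<and>
       (-1) ^ v * A_coef v lam \<le> C * (real v + lam) * exp (Psi v lam - lam) \<and>
       c * (real v + lam) powr (-1) * exp (Psi v lam + lam) \<le> B_coef v lam \<and>
       B_coef v lam \<le> C * (real v + lam) * exp (Psi v lam + lam)) \<and>
      (real v \<le> lam \<longrightarrow>
       c * (real v + lam) powr (-1) * exp (Psi v lam - lam) \<le> (-1) ^ v * A_coef v lam \<and>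
       (-1) ^ v * A_coef v lam \<le> C * lam powr (-1/2) * exp (Psi v lam - lam)))"
proof (intro exI conjI allI impI)
  show "(16::real) > 0" by simp
  show "exp (-4) / 3 > (0::real)" by simp
  fix v :: nat and lam :: real
  assume lam: "lam \<ge> 1/2"
  define S where "S = suminf (tm v lam)"
  have c: "exp (Psi v lam) * (exp (-4) / (3 * (real v + lam))) \<le> S"
          "S \<le> exp (Psi v lam) * (2 / sqrt lam)"
    using core[OF lam, of v] unfolding S_def by auto
  have tmeq: "(\<lambda>k. lam ^ (v + 2*k) / (2 ^ (v + 2*k) * fact (v + 2*k)) * real ((v + 2*k) choose k)) = tm v lam"
    by (rule ext) (simp add: tm_def)
  have A: "(-1) ^ v * A_coef v lam = 2 * exp (-lam) * S"
    unfolding A_coef_def tmeq S_def using neg1sq[of v] by (simp add: algebra_simps)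
  have B: "B_coef v lam = 2 * exp lam * S"
    unfolding B_coef_def tmeq S_def by simp
  have em: "exp (Psi v lam - lam) = exp (Psi v lam) * exp (-lam)" by (simp add: exp_diff exp_minus divide_inverse)
  have ep: "exp (Psi v lam + lam) = exp (Psi v lam) * exp lam" by (simp add: exp_add)
  note fm = fin_aux[of "exp (-lam)" "exp (Psi v lam)" lam "real v" S, OF _ _ lam _ c(1) c(2), simplified]
  note fp = fin_aux[of "exp lam" "exp (Psi v lam)" lam "real v" S, OF _ _ lam _ c(1) c(2), simplified]
  show "exp (-4) / 3 * (real v + lam) powr (-1) * exp (Psi v lam - lam) \<le> (-1) ^ v * A_coef v lam"
    unfolding A em using fm(1) by simp
  show "exp (-4) / 3 * (real v + lam) powr (-1) * exp (Psi v lam - lam) \<le> (-1) ^ v * A_coef v lam"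
    unfolding A em using fm(1) by simp
  show "(-1) ^ v * A_coef v lam \<le> 16 * (real v + lam) * exp (Psi v lam - lam)"
    unfolding A em using fm(2) by simp
  show "exp (-4) / 3 * (real v + lam) powr (-1) * exp (Psi v lam + lam) \<le> B_coef v lam"
    unfolding B ep using fp(1) by simp
  show "B_coef v lam \<le> 16 * (real v + lam) * exp (Psi v lam + lam)"
    unfolding B ep using fp(2) by simp
  show "(-1) ^ v * A_coef v lam \<le> 16 * lam powr (-1/2) * exp (Psi v lam - lam)"
    unfolding A em using fm(3) by simp
qed

end
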